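(* A linear operator $Q:P\to P$ is a $\partial_\psi$-delta operator if and only if there exists an invertible $S\in\Sigma_\psi$ (with $S^{-1}\in\Sigma_\psi$) such that $Q=\partial_\psi S$.
   Context: Let $F$ be a field of characteristic $0$, $P=F[x]$. Fix $(\psi_n)_{n\ge0}$ in $F$ with $\psi_0=1$, $\psi_n\ne0$, $\psi_{-1}=0$; $n_\psi=\psi_{n-1}/\psi_n$, $n_\psi!=1/\psi_n$, $0_\psi!=1$. $\partial_\psi x^n=n_\psi x^{n-1}$ (linear); $E^a(\partial_\psi)=\sum_k\frac{a^k}{k_\psi!}\partial_\psi^k$. $\Sigma_\psi$ is the algebra of linear $T:P\to P$ commuting with all $E^a(\partial_\psi)$, $a\in F$. A $\partial_\psi$-delta operator is $Q\in\Sigma_\psi$ with $Q(x)$ a nonzero constant. *)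

theory Defs
  imports "HOL-Computational_Algebra.Polynomial"
begin

definition npsi :: "(nat \<Rightarrow> 'a::field) \<Rightarrow> nat \<Rightarrow> 'a" where
  "npsi psi n = (if n = 0 then 0 else psi (n - 1) / psi n)"

definition dpsi :: "(nat \<Rightarrow> 'a::field) \<Rightarrow> 'a poly \<Rightarrow> 'a poly" where
  "dpsi psi p = (\<Sum>n\<le>degree p. monom (coeff p n * npsi psi n) (n - 1))"

text \<open>E^a(d_psi) = sum_k a^k / k_psi! d_psi^k, with 1/k_psi! = psi k;
  on a polynomial p the terms with k > degree p vanish.\<close>
definition Epsi :: "(nat \<Rightarrow> 'a::field) \<Rightarrow> 'a \<Rightarrow> 'a poly \<Rightarrow> 'a poly" where
  "Epsi psi a p = (\<Sum>k\<le>degree p. smult (a ^ k * psi k) ((dpsi psi ^^ k) p))"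

definition flinear :: "('a::field poly \<Rightarrow> 'a poly) \<Rightarrow> bool" where
  "flinear T \<longleftrightarrow> (\<forall>p q. T (p + q) = T p + T q) \<and> (\<forall>c p. T (smult c p) = smult c (T p))"

definition Sigma_psi :: "(nat \<Rightarrow> 'a::field) \<Rightarrow> ('a poly \<Rightarrow> 'a poly) set" where
  "Sigma_psi psi = {T. flinear T \<and> (\<forall>a. T \<circ> Epsi psi a = Epsi psi a \<circ> T)}"

definition delta_op :: "(nat \<Rightarrow> 'a::field) \<Rightarrow> ('a poly \<Rightarrow> 'a poly) \<Rightarrow> bool" where
  "delta_op psi Q \<longleftrightarrow> Q \<in> Sigma_psi psi \<and> (\<exists>c. c \<noteq> 0 \<and> Q [:0, 1:] = [:c:])"

end

theory Submission imports Defs "HOL-Computational_Algebra.Formal_Power_Series" begin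

lemma coeff_dpsi: "coeff (dpsi psi p) n = coeff p (Suc n) * psi n / psi (Suc n)"
proof -
  have "coeff (dpsi psi p) n = (\<Sum>m\<le>degree p. if m - 1 = n then coeff p m * npsi psi m else 0)"
    by (simp add: dpsi_def coeff_sum coeff_monom)
  also have "\<dots> = (\<Sum>m\<in>{Suc n} \<inter> {..degree p}. coeff p m * npsi psi m)"
    by (rule sum.mono_neutral_cong_right) (auto simp: npsi_def)
  also have "\<dots> = coeff p (Suc n) * psi n / psi (Suc n)"
    by (cases "Suc n \<le> degree p") (auto simp: npsi_def coeff_eq_0)
  finally show ?thesis .
qed

lemma smult_sum_right: "smult c (sum g A) = (\<Sum>x\<in>A. smult c (g x))"
  by (induction A rule: infinite_finite_induct) (auto simp: smult_add_right)

lemma flinear_add: "flinear T \<Longrightarrow> T (p + q) = T p + T q" by (simp add: flinear_def)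
lemma flinear_smult: "flinear T \<Longrightarrow> T (smult c p) = smult c (T p)" by (simp add: flinear_def)
lemma flinear_zero: "flinear T \<Longrightarrow> T 0 = 0"
  using flinear_smult[of T 0 0] by simp
lemma flinear_diff: "flinear T \<Longrightarrow> T (p - q) = T p - T q"
  using flinear_add[of T "p - q" q] by (simp add: algebra_simps)
lemma flinear_sum: "flinear T \<Longrightarrow> T (sum g A) = (\<Sum>x\<in>A. T (g x))"
  by (induction A rule: infinite_finite_induct) (auto simp: flinear_zero flinear_add)
lemma flinear_comp: "flinear S \<Longrightarrow> flinear T \<Longrightarrow> flinear (S \<circ> T)"
  by (simp add: flinear_def)
lemma flinear_id: "flinear id" by (simp add: flinear_def)

lemma flinear_dpsi: "flinear (dpsi psi)"
  unfolding flinear_def by (auto simp: poly_eq_iff coeff_dpsi algebra_simps add_divide_distrib)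

lemma flinear_funpow: "flinear T \<Longrightarrow> flinear (T ^^ k)"
  by (induction k) (auto simp: flinear_id flinear_comp)

locale psictx =
  fixes psi :: "nat \<Rightarrow> 'a::field_char_0"
  assumes nz: "\<And>n. psi n \<noteq> 0" and one: "psi 0 = 1"
begin

abbreviation D where "D \<equiv> dpsi psi"

lemma coeff_dpsi_pow: "coeff ((D ^^ k) p) n = coeff p (n + k) * psi n / psi (n + k)"
proof (induction k arbitrary: n)
  case 0 then show ?case using nz by simp
next
  case (Suc k)
  show ?case using nz[of "Suc n"] by (simp add: coeff_dpsi Suc)
qed

lemma Dpow_add[simp]: "(D ^^ k) (p + q) = (D ^^ k) p + (D ^^ k) q"
  using flinear_add[OF flinear_funpow[OF flinear_dpsi]] by blast
lemma Dpow_smult[simp]: "(D ^^ k) (smult c p) = smult c ((D ^^ k) p)"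
  using flinear_smult[OF flinear_funpow[OF flinear_dpsi]] by blast

lemma dpsi_pow_zero: "degree p < k \<Longrightarrow> (D ^^ k) p = 0"
  by (simp add: poly_eq_iff coeff_dpsi_pow coeff_eq_0)

definition Ser :: "'a fps \<Rightarrow> 'a poly \<Rightarrow> 'a poly" where
  "Ser f p = (\<Sum>k\<le>degree p. smult (fps_nth f k) ((D ^^ k) p))"

lemma Ser_bound: assumes "degree p \<le> N"
  shows "Ser f p = (\<Sum>k\<le>N. smult (fps_nth f k) ((D ^^ k) p))"
  unfolding Ser_def
  by (rule sum.mono_neutral_left) (use assms in \<open>auto simp: dpsi_pow_zero\<close>)

lemma flinear_Ser: "flinear (Ser f)"
proof -
  have "Ser f (p + q) = Ser f p + Ser f q" for p q
  proof -
    let ?N = "max (degree p) (degree q)"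
    have "degree (p + q) \<le> ?N" by (rule degree_add_le) auto
    then show ?thesis
      using Ser_bound[of p ?N f] Ser_bound[of q ?N f] Ser_bound[of "p+q" ?N f]
      by (simp add: sum.distrib smult_add_right)
  qed
  moreover have "Ser f (smult c p) = smult c (Ser f p)" for c p
  proof -
    have "degree (smult c p) \<le> degree p" by simp
    then show ?thesis
      using Ser_bound[of p "degree p" f] Ser_bound[of "smult c p" "degree p" f]
      by (simp add: smult_sum_right mult.commute)
  qed
  ultimately show ?thesis by (simp add: flinear_def)
qed

lemma coeff_Ser: assumes "degree p \<le> N"
  shows "coeff (Ser f p) n = (\<Sum>k\<le>N. fps_nth f k * coeff p (n + k) * psi n / psi (n + k))"
  by (simp add: Ser_bound[OF assms] coeff_sum coeff_dpsi_pow mult.assoc)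

lemma degree_dpsi: "degree (D p) \<le> degree p"
  by (rule degree_le) (auto simp: coeff_dpsi coeff_eq_0)

lemma Ser_dpsi: "Ser f (D p) = D (Ser f p)"
proof -
  have "Ser f (D p) = (\<Sum>k\<le>degree p. smult (fps_nth f k) ((D ^^ k) (D p)))"
    by (rule Ser_bound[OF degree_dpsi])
  also have "\<dots> = D (Ser f p)"
    by (simp add: Ser_def flinear_sum[OF flinear_dpsi] flinear_smult[OF flinear_dpsi]
        funpow_swap1)
  finally show ?thesis .
qed

lemma Epsi_Ser: "Epsi psi a = Ser (Abs_fps (\<lambda>k. a ^ k * psi k))"
  by (auto simp: Epsi_def Ser_def fun_eq_iff)

lemma dpsi_const: "D p = 0 \<Longrightarrow> p = [:coeff p 0:]"
proof -
  assume h: "D p = 0"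
  have "coeff p (Suc n) = 0" for n
    using arg_cong[OF h, of "\<lambda>q. coeff q n"] nz[of n] nz[of "Suc n"] by (simp add: coeff_dpsi)
  then show ?thesis by (auto simp: poly_eq_iff coeff_pCons split: nat.split)
qed


definition u :: "nat \<Rightarrow> 'a poly" where "u n = monom (psi n) n"

lemma degree_u[simp]: "degree (u n) = n" using nz by (simp add: u_def degree_monom_eq)
lemma coeff_u: "coeff (u n) k = (if k = n then psi n else 0)" by (simp add: u_def coeff_monom)
lemma D_u_Suc: "D (u (Suc n)) = u n"
  by (auto simp: poly_eq_iff coeff_dpsi coeff_u nz)
lemma D_u_0: "D (u 0) = 0"
  by (auto simp: poly_eq_iff coeff_dpsi coeff_u nz)
lemma u_0: "u 0 = 1" by (simp add: u_def one)

lemma coeff0_Ser_u: "coeff (Ser f (u n)) 0 = fps_nth f n"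
proof -
  have "coeff (Ser f (u n)) 0 = (\<Sum>k\<le>n. fps_nth f k * coeff (u n) k * psi 0 / psi k)"
    using coeff_Ser[of "u n" n f 0] by simp
  also have "\<dots> = (\<Sum>k\<in>{n}. fps_nth f k * coeff (u n) k * psi 0 / psi k)"
    by (rule sum.mono_neutral_right) (auto simp: coeff_u)
  also have "\<dots> = fps_nth f n" using nz[of n] by (simp add: coeff_u one)
  finally show ?thesis .
qed

lemma u_expand: "p = (\<Sum>n\<le>degree p. smult (coeff p n / psi n) (u n))"
proof (rule poly_eqI)
  fix n
  have "coeff (\<Sum>m\<le>degree p. smult (coeff p m / psi m) (u m)) n
     = (\<Sum>m\<le>degree p. if m = n then coeff p n else 0)"
    unfolding coeff_sum by (rule sum.cong) (auto simp: coeff_u nz)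
  also have "\<dots> = coeff p n" by (simp add: coeff_eq_0)
  finally show "coeff p n = coeff (\<Sum>m\<le>degree p. smult (coeff p m / psi m) (u m)) n" by simp
qed

lemma expansion:
  assumes lin: "flinear T" and com: "\<And>p. T (D p) = D (T p)"
  shows "T = Ser (Abs_fps (\<lambda>n. coeff (T (u n)) 0))"
proof -
  define f where "f = Abs_fps (\<lambda>n. coeff (T (u n)) 0)"
  have tu: "T (u n) = Ser f (u n)" for n
  proof (induction n)
    case 0
    have "D (T (u 0) - Ser f (u 0)) = 0"
      by (simp add: flinear_diff[OF flinear_dpsi] flip: com Ser_dpsi)
        (simp add: D_u_0 flinear_zero[OF lin] flinear_zero[OF flinear_Ser])
    then have "T (u 0) - Ser f (u 0) = [:coeff (T (u 0) - Ser f (u 0)) 0:]" by (rule dpsi_const)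
    also have "\<dots> = 0" by (simp add: coeff0_Ser_u f_def)
    finally show ?case by simp
  next
    case (Suc n)
    have "D (T (u (Suc n)) - Ser f (u (Suc n))) = 0"
      by (simp add: flinear_diff[OF flinear_dpsi] flip: com Ser_dpsi)
        (simp add: D_u_Suc Suc)
    then have "T (u (Suc n)) - Ser f (u (Suc n)) = [:coeff (T (u (Suc n)) - Ser f (u (Suc n))) 0:]"
      by (rule dpsi_const)
    also have "\<dots> = 0" by (simp add: coeff0_Ser_u f_def)
    finally show ?case by simp
  qed
  show ?thesis unfolding f_def[symmetric]
  proof
    fix p
    have "T p = T (\<Sum>n\<le>degree p. smult (coeff p n / psi n) (u n))" by (subst u_expand) rule
    also have "\<dots> = Ser f (\<Sum>n\<le>degree p. smult (coeff p n / psi n) (u n))"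
      by (simp add: flinear_sum[OF lin] flinear_sum[OF flinear_Ser] flinear_smult[OF lin]
          flinear_smult[OF flinear_Ser] tu)
    also have "\<dots> = Ser f p" by (subst (2) u_expand) rule
    finally show "T p = Ser f p" .
  qed
qed


lemma coeff_Ser_u: "coeff (Ser g (u n)) k = (if k \<le> n then fps_nth g (n - k) * psi k else 0)"
proof -
  have "coeff (Ser g (u n)) k = (\<Sum>j\<le>n. fps_nth g j * coeff (u n) (k + j) * psi k / psi (k + j))"
    by (simp add: coeff_Ser)
  also have "\<dots> = (\<Sum>j\<le>n. if j = n - k \<and> k \<le> n then fps_nth g (n - k) * psi k else 0)"
    by (rule sum.cong) (auto simp: coeff_u nz)
  also have "\<dots> = (if k \<le> n then fps_nth g (n - k) * psi k else 0)"
    by (cases "k \<le> n") (simp_all add: sum.delta')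
  finally show ?thesis .
qed

lemma degree_Ser_u: "degree (Ser g (u n)) \<le> n"
  by (rule degree_le) (simp add: coeff_Ser_u)

lemma Ser_mult: "Ser f (Ser g p) = Ser (f * g) p"
proof -
  have lin: "flinear (Ser f \<circ> Ser g)" by (intro flinear_comp flinear_Ser)
  have "Ser f \<circ> Ser g = Ser (Abs_fps (\<lambda>n. coeff ((Ser f \<circ> Ser g) (u n)) 0))"
    by (rule expansion[OF lin]) (simp add: Ser_dpsi)
  also have "Abs_fps (\<lambda>n. coeff ((Ser f \<circ> Ser g) (u n)) 0) = f * g"
  proof (rule fps_ext)
    fix n
    have "coeff (Ser f (Ser g (u n))) 0
       = (\<Sum>k\<le>n. fps_nth f k * coeff (Ser g (u n)) k * psi 0 / psi k)"
      using coeff_Ser[OF degree_Ser_u[of g n], of f 0] by simp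
    also have "\<dots> = (\<Sum>k\<le>n. fps_nth f k * fps_nth g (n - k))"
      by (rule sum.cong) (auto simp: coeff_Ser_u nz one)
    also have "\<dots> = fps_nth (f * g) n"
      by (simp add: fps_mult_nth atLeast0AtMost)
    finally show "fps_nth (Abs_fps (\<lambda>n. coeff ((Ser f \<circ> Ser g) (u n)) 0)) n = fps_nth (f * g) n"
      by simp
  qed
  finally show ?thesis by (simp add: fun_eq_iff)
qed

lemma Ser_one: "Ser 1 = id"
proof
  fix p
  have "Ser 1 p = (\<Sum>k\<le>degree p. if k = 0 then p else 0)"
    unfolding Ser_def by (rule sum.cong) auto
  then show "Ser 1 p = id p" by simp
qed

lemma Ser_X: "Ser fps_X = D"
proof
  fix p
  have "Ser fps_X p = (\<Sum>k\<le>Suc (degree p). smult (fps_nth fps_X k) ((D ^^ k) p))"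
    by (rule Ser_bound) simp
  also have "\<dots> = (\<Sum>k\<le>Suc (degree p). if k = 1 then D p else 0)"
    by (rule sum.cong) auto
  also have "\<dots> = D p" by simp
  finally show "Ser fps_X p = D p" .
qed

lemma Ser_Sigma: "Ser f \<in> Sigma_psi psi"
  unfolding Sigma_psi_def
  by (auto simp: flinear_Ser Epsi_Ser fun_eq_iff Ser_mult mult.commute)

lemma D_Sigma: "D \<in> Sigma_psi psi"
  using Ser_Sigma[of fps_X] by (simp add: Ser_X)


lemma Sigma_comm:
  assumes T: "T \<in> Sigma_psi psi"
  shows "T (D p) = D (T p)"
proof -
  have lin: "flinear T" and com: "\<And>a q. T (Epsi psi a q) = Epsi psi a (T q)"
    using T by (auto simp: Sigma_psi_def fun_eq_iff)
  define N where "N = Suc (max (degree p) (degree (T p)))"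
  define E where "E k = T ((D ^^ k) p) - (D ^^ k) (T p)" for k
  have z: "(\<Sum>k\<le>N. smult (a ^ k * psi k) (E k)) = 0" for a
  proof -
    have "Epsi psi a p = (\<Sum>k\<le>N. smult (a ^ k * psi k) ((D ^^ k) p))"
      unfolding Epsi_Ser by (subst Ser_bound[of p N]) (auto simp: N_def)
    moreover have "Epsi psi a (T p) = (\<Sum>k\<le>N. smult (a ^ k * psi k) ((D ^^ k) (T p)))"
      unfolding Epsi_Ser by (subst Ser_bound[of "T p" N]) (auto simp: N_def)
    ultimately have "(\<Sum>k\<le>N. smult (a ^ k * psi k) (T ((D ^^ k) p)))
        = (\<Sum>k\<le>N. smult (a ^ k * psi k) ((D ^^ k) (T p)))"
      using com[of a p] by (simp add: flinear_sum[OF lin] flinear_smult[OF lin])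
    then show ?thesis
      by (simp add: E_def smult_diff_right sum_subtractf)
  qed
  have "coeff (E 1) j = 0" for j
  proof -
    define r where "r = (\<Sum>k\<le>N. monom (psi k * coeff (E k) j) k)"
    have "poly r a = 0" for a
    proof -
      have "poly r a = coeff (\<Sum>k\<le>N. smult (a ^ k * psi k) (E k)) j"
        by (simp add: r_def poly_sum poly_monom coeff_sum mult_ac)
      then show ?thesis by (simp add: z)
    qed
    then have "r = 0" using poly_all_0_iff_0 by blast
    moreover have "coeff r 1 = psi 1 * coeff (E 1) j"
    proof -
      have "coeff r 1 = (\<Sum>k\<le>N. if k = 1 then psi 1 * coeff (E 1) j else 0)"
        unfolding r_def coeff_sum by (rule sum.cong) (auto simp: coeff_monom)
      also have "\<dots> = psi 1 * coeff (E 1) j" by (simp add: N_def) linarith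
      finally show ?thesis .
    qed
    ultimately show ?thesis using nz[of 1] by simp
  qed
  then have "E 1 = 0" by (simp add: poly_eq_iff)
  then show ?thesis by (simp add: E_def)
qed


lemma D_x: "D [:0, 1:] = [:1 / psi 1:]"
  by (auto simp: poly_eq_iff coeff_dpsi one coeff_pCons split: nat.split)

lemma D_const: "D [:c:] = 0"
  by (auto simp: poly_eq_iff coeff_dpsi)

end

theorem mainTheorem10:
  fixes psi :: "nat \<Rightarrow> 'a::field_char_0" and Q :: "'a poly \<Rightarrow> 'a poly"
  assumes "psi 0 = 1" and "\<forall>n. psi n \<noteq> 0" and "flinear Q"
  shows "delta_op psi Q \<longleftrightarrow>
    (\<exists>S S'. S \<in> Sigma_psi psi \<and> S' \<in> Sigma_psi psi \<and> S \<circ> S' = id \<and> S' \<circ> S = id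
       \<and> Q = dpsi psi \<circ> S)"
proof -
  interpret psictx psi using assms(1,2) by unfold_locales auto
  have nz1: "psi 1 \<noteq> 0" using nz .
  show ?thesis
  proof
    assume "delta_op psi Q"
    then obtain c where QS: "Q \<in> Sigma_psi psi" and c: "c \<noteq> 0" and Qx: "Q [:0, 1:] = [:c:]"
      by (auto simp: delta_op_def)
    have lin: "flinear Q" using QS by (simp add: Sigma_psi_def)
    have com: "\<And>p. Q (D p) = D (Q p)" using Sigma_comm[OF QS] .
    define f where "f = Abs_fps (\<lambda>n. coeff (Q (u n)) 0)"
    have Qf: "Q = Ser f" unfolding f_def by (rule expansion[OF lin com])
    have "smult (1 / psi 1) (Q 1) = Q [:1 / psi 1:]"
      using flinear_smult[OF lin, of "1 / psi 1" 1] by simp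
    also have "\<dots> = 0" using com[of "[:0, 1:]"] by (simp add: D_x Qx D_const)
    finally have Q1: "Q 1 = 0" using nz1 by simp
    have f0: "fps_nth f 0 = 0" by (simp add: f_def u_0 Q1)
    have "u 1 = smult (psi 1) [:0, 1:]" by (simp add: u_def monom_altdef)
    then have "Q (u 1) = smult (psi 1) [:c:]"
      using flinear_smult[OF lin, of "psi 1" "[:0, 1:]"] Qx by simp
    then have f1: "fps_nth f 1 = psi 1 * c"
      by (simp add: f_def)
    define g where "g = fps_shift 1 f"
    have fg: "f = fps_X * g"
      by (rule fps_ext) (auto simp: g_def f0)
    have g0: "fps_nth g 0 \<noteq> 0" using f1 c nz1 by (simp add: g_def)
    show "\<exists>S S'. S \<in> Sigma_psi psi \<and> S' \<in> Sigma_psi psi \<and> S \<circ> S' = id \<and> S' \<circ> S = id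
       \<and> Q = dpsi psi \<circ> S"
    proof (intro exI conjI)
      show "Ser g \<in> Sigma_psi psi" "Ser (inverse g) \<in> Sigma_psi psi" by (rule Ser_Sigma)+
      show "Ser g \<circ> Ser (inverse g) = id"
        using inverse_mult_eq_1'[OF g0] by (simp add: fun_eq_iff Ser_mult flip: Ser_one)
      show "Ser (inverse g) \<circ> Ser g = id"
        using inverse_mult_eq_1[OF g0] by (simp add: fun_eq_iff Ser_mult flip: Ser_one)
      show "Q = dpsi psi \<circ> Ser g"
        by (simp add: fun_eq_iff Qf fg flip: Ser_X Ser_mult)
    qed
  next
    assume "\<exists>S S'. S \<in> Sigma_psi psi \<and> S' \<in> Sigma_psi psi \<and> S \<circ> S' = id \<and> S' \<circ> S = id
       \<and> Q = dpsi psi \<circ> S"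
    then obtain S S' where SS: "S \<in> Sigma_psi psi" and S'S: "S' \<in> Sigma_psi psi"
      and inv: "S' \<circ> S = id" and QD: "Q = D \<circ> S" by blast
    have linS: "flinear S" using SS by (simp add: Sigma_psi_def)
    have comS: "\<And>p. S (D p) = D (S p)" using Sigma_comm[OF SS] .
    have "D (S 1) = 0" using comS[of 1] D_u_0 u_0 flinear_zero[OF linS] by simp
    then have S1: "S 1 = [:coeff (S 1) 0:]" by (rule dpsi_const)
    define s where "s = coeff (S 1) 0"
    have s: "s \<noteq> 0"
    proof
      assume "s = 0"
      then have "S 1 = 0" using S1 by (simp add: s_def)
      then have "S' (S 1) = S' (S 0)" using flinear_zero[OF linS] by simp
      then show False using inv by (simp add: fun_eq_iff)
    qed
    have "Q [:0, 1:] = D (S [:0, 1:])" by (simp add: QD)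
    also have "\<dots> = S [:1 / psi 1:]" using comS[of "[:0, 1:]"] by (simp add: D_x)
    also have "\<dots> = smult (1 / psi 1) (S 1)"
      using flinear_smult[OF linS, of "1 / psi 1" 1] by simp
    also have "\<dots> = [:s / psi 1:]" by (subst S1) (simp add: s_def)
    finally have Qx: "Q [:0, 1:] = [:s / psi 1:]" .
    have "Q \<in> Sigma_psi psi"
      using SS D_Sigma unfolding QD Sigma_psi_def
      by (auto simp: flinear_comp fun_eq_iff)
    then show "delta_op psi Q"
      unfolding delta_op_def using Qx s nz1 by auto
  qed
qed

end
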